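(* In the simplicial setting, an $\mathcal I$-space $X$ is flat if and only if (a) each morphism $\mathbf m\to\mathbf n$ of $\mathcal I$ induces a cofibration (injection) $X(\mathbf m)\to X(\mathbf n)$, and (b) for all $l,m,n\ge0$, in the commutative square with corners $X(\mathbf m)$, $X(\mathbf m\sqcup\mathbf n)$, $X(\mathbf l\sqcup\mathbf m)$, $X(\mathbf l\sqcup\mathbf m\sqcup\mathbf n)$ and maps induced by the evident order-preserving inclusions, the intersection of the images of $X(\mathbf l\sqcup\mathbf m)$ and $X(\mathbf m\sqcup\mathbf n)$ in $X(\mathbf l\sqcup\mathbf m\sqcup\mathbf n)$ equals the image of $X(\mathbf m)$.
   Context: $\mathcal I$ is the category with objects the finite sets $\mathbf n=\{1,\dots,n\}$, $n\ge0$, and morphisms the injective maps; $\mathbf m\sqcup\mathbf n$ denotes ordered concatenation. An $\mathcal I$-space is a functor from $\mathcal I$ to simplicial sets. For an object $\mathbf n$, let $\partial(\mathcal I\downarrow\mathbf n)$ be the full subcategory of the comma category $(\mathcal I\downarrow\mathbf n)$ on the objects $\mathbf m\to\mathbf n$ that are not isomorphisms; the latching space is $L_{\mathbf n}(X)=\operatorname{colim}_{\partial(\mathcal I\downarrow\mathbf n)}X$ (via the forgetful functor to $\mathcal I$). A map $X\to Y$ is a flat cofibration if $X(\mathbf n)\cup_{L_{\mathbf n}(X)}L_{\mathbf n}(Y)\to Y(\mathbf n)$ is a cofibration for all $\mathbf n$. An $\mathcal I$-space $X$ is flat if $\emptyset\to X$ is a flat cofibration, i.e. $L_{\mathbf n}(X)\to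 X(\mathbf n)$ is a cofibration for all $\mathbf n$. *)

theory Defs
  imports Main "HOL-Library.FuncSet"
begin

text \<open>The category I: objects are naturals n (standing for the set {0..<n}),
 morphisms m -> n are injective extensional maps {..<m} -> {..<n}.\<close>

definition Inj :: "nat \<Rightarrow> nat \<Rightarrow> (nat \<Rightarrow> nat) set" where
  "Inj m n = {f \<in> {..<m} \<rightarrow>\<^sub>E {..<n}. inj_on f {..<m}}"

text \<open>The simplex category: objects [k] = {0..k}, morphisms monotone extensional maps.\<close>

definition DeltaMor :: "nat \<Rightarrow> nat \<Rightarrow> (nat \<Rightarrow> nat) set" where
  "DeltaMor j k = {f \<in> {..j} \<rightarrow>\<^sub>E {..k}. mono_on {..j} f}"

text \<open>An I-space (functor from I to simplicial sets), with underlying sets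
 X n k (the k-simplices of X(n)); imap m n a k is the map X(m)_k -> X(n)_k
 induced by a : m -> n in I; smap j k t n is the simplicial operator
 X(n)_k -> X(n)_j induced by t : [j] -> [k] in Delta.\<close>

definition I_space ::
  "(nat \<Rightarrow> nat \<Rightarrow> 'a set) \<Rightarrow> (nat \<Rightarrow> nat \<Rightarrow> (nat \<Rightarrow> nat) \<Rightarrow> nat \<Rightarrow> 'a \<Rightarrow> 'a)
   \<Rightarrow> (nat \<Rightarrow> nat \<Rightarrow> (nat \<Rightarrow> nat) \<Rightarrow> nat \<Rightarrow> 'a \<Rightarrow> 'a) \<Rightarrow> bool" where
  "I_space X imap smap \<longleftrightarrow>
     (\<forall>m n a k. a \<in> Inj m n \<longrightarrow> imap m n a k \<in> X m k \<rightarrow> X n k)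
   \<and> (\<forall>n k x. x \<in> X n k \<longrightarrow> imap n n (restrict id {..<n}) k x = x)
   \<and> (\<forall>m n p a b k x. a \<in> Inj m n \<longrightarrow> b \<in> Inj n p \<longrightarrow> x \<in> X m k \<longrightarrow>
        imap m p (compose {..<m} b a) k x = imap n p b k (imap m n a k x))
   \<and> (\<forall>j k t n. t \<in> DeltaMor j k \<longrightarrow> smap j k t n \<in> X n k \<rightarrow> X n j)
   \<and> (\<forall>n k x. x \<in> X n k \<longrightarrow> smap k k (restrict id {..k}) n x = x)
   \<and> (\<forall>i j k s t n x. s \<in> DeltaMor i j \<longrightarrow> t \<in> DeltaMor j k \<longrightarrow> x \<in> X n k \<longrightarrow>
        smap i k (compose {..i} t s) n x = smap i j s n (smap j k t n x))
   \<and> (\<forall>m n a j k t x. a \<in> Inj m n \<longrightarrow> t \<in> DeltaMor j k \<longrightarrow> x \<in> X m k \<longrightarrow>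
        imap m n a j (smap j k t m x) = smap j k t n (imap m n a k x))"

text \<open>Latching space in simplicial degree k, computed as the colimit in Set over
 the category \<partial>(I \<down> n) (objects: non-isomorphisms a : m -> n, i.e. m < n;
 morphisms (m,a) -> (m',a'): b : m -> m' with a' o b = a), by the standard
 construction: disjoint union modulo the equivalence relation generated by
 the morphisms. Colimits of simplicial sets are computed degreewise.\<close>

definition latch_elems :: "(nat \<Rightarrow> nat \<Rightarrow> 'a set) \<Rightarrow> nat \<Rightarrow> nat \<Rightarrow> (nat \<times> (nat \<Rightarrow> nat) \<times> 'a) set" where
  "latch_elems X n k = {(m, a, x). m < n \<and> a \<in> Inj m n \<and> x \<in> X m k}"

definition latch_step ::
  "(nat \<Rightarrow> nat \<Rightarrow> 'a set) \<Rightarrow> (nat \<Rightarrow> nat \<Rightarrow> (nat \<Rightarrow> nat) \<Rightarrow> nat \<Rightarrow> 'a \<Rightarrow> 'a) \<Rightarrow> nat \<Rightarrow> nat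
   \<Rightarrow> ((nat \<times> (nat \<Rightarrow> nat) \<times> 'a) \<times> (nat \<times> (nat \<Rightarrow> nat) \<times> 'a)) set" where
  "latch_step X imap n k = {((m, compose {..<m} a' b, x), (m', a', imap m m' b k x)) | m m' a' b x.
       m' < n \<and> a' \<in> Inj m' n \<and> b \<in> Inj m m' \<and> x \<in> X m k}"

definition latch_rel where
  "latch_rel X imap n k = Id_on (latch_elems X n k) \<union> (latch_step X imap n k \<union> (latch_step X imap n k)\<inverse>)\<^sup>+"

definition latching_space where
  "latching_space X imap n k = latch_elems X n k // latch_rel X imap n k"

definition latching_map where
  "latching_map X imap n k c = the_elem ((\<lambda>(m, a, x). imap m n a k x) ` c)"

text \<open>Cofibrations of simplicial sets are the monomorphisms (degreewise injective).
 X is flat iff L_n(X) -> X(n) is a cofibration for every n.\<close>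

definition flat_I_space where
  "flat_I_space X imap \<longleftrightarrow>
     (\<forall>n k. inj_on (latching_map X imap n k) (latching_space X imap n k))"

end

theory Submission
  imports Defs
begin


lemma InjD:
  assumes "a \<in> Inj m n"
  shows "inj_on a {..<m}" "a \<in> extensional {..<m}" "a ` {..<m} \<subseteq> {..<n}"
    "\<And>i. i < m \<Longrightarrow> a i < n"
  using assms by (auto simp: Inj_def PiE_def Pi_def)

lemma InjI: "inj_on a {..<m} \<Longrightarrow> a \<in> extensional {..<m} \<Longrightarrow> (\<And>i. i < m \<Longrightarrow> a i < n) \<Longrightarrow> a \<in> Inj m n"
  by (auto simp: Inj_def PiE_def Pi_def)

lemma Inj_compose: "a \<in> Inj m n \<Longrightarrow> b \<in> Inj n p \<Longrightarrow> compose {..<m} b a \<in> Inj m p"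
  apply (rule InjI)
  subgoal premises P unfolding compose_def inj_on_restrict_eq using comp_inj_on[OF InjD(1)[OF P(1)] inj_on_subset[OF InjD(1)[OF P(2)] InjD(3)[OF P(1)]]] by (simp add: comp_def)
  subgoal by (simp add: compose_def)
  subgoal by (simp add: compose_eq InjD(4))
  done

lemma Inj_id: "restrict id {..<n} \<in> Inj n n"
  by (rule InjI) (auto simp: inj_on_def)

lemma Inj_le: "a \<in> Inj m n \<Longrightarrow> m \<le> n"
  using card_inj_on_le[of a "{..<m}" "{..<n}"] InjD by auto

lemma Inj_less: assumes "a \<in> Inj m n" "j < n" "j \<notin> a ` {..<m}" shows "m < n"
proof -
  have "a ` {..<m} \<subseteq> {..<n} - {j}" using InjD[OF assms(1)] assms by auto
  then have "card {..<m} \<le> card ({..<n} - {j})"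
    using card_inj_on_le[of a "{..<m}" "{..<n} - {j}"] InjD[OF assms(1)] by auto
  then show ?thesis using assms(2) by auto
qed

lemma Inj_factor:
  assumes c: "c \<in> Inj r N" and e: "e \<in> Inj p N" and sub: "c ` {..<r} \<subseteq> e ` {..<p}"
  shows "\<exists>d \<in> Inj r p. compose {..<r} e d = c"
proof -
  define d where "d = restrict (\<lambda>i. inv_into {..<p} e (c i)) {..<r}"
  have "d \<in> Inj r p"
  proof (rule InjI)
    show "inj_on d {..<r}"
    proof -
      have "inj_on (inv_into {..<p} e) (c ` {..<r})" using sub by (rule inj_on_inv_into)
      then have "inj_on (inv_into {..<p} e \<circ> c) {..<r}" using InjD(1)[OF c] by (simp add: comp_inj_on)
      then show ?thesis unfolding d_def by (simp add: inj_on_def)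
    qed
    show "d \<in> extensional {..<r}" unfolding d_def by simp
    fix i assume "i < r"
    then have "c i \<in> e ` {..<p}" using sub by auto
    then show "d i < p" using \<open>i < r\<close> unfolding d_def by (auto intro: inv_into_into[of _ _ "{..<p}", simplified])
  qed
  moreover have "compose {..<r} e d = c"
  proof (rule extensionalityI[of _ "{..<r}"])
    show "compose {..<r} e d \<in> extensional {..<r}" by (simp add: compose_def)
    show "c \<in> extensional {..<r}" using InjD(2)[OF c] .
    fix i assume "i \<in> {..<r}"
    then show "compose {..<r} e d i = c i" using sub unfolding d_def
      by (auto simp: compose_eq f_inv_into_f)
  qed
  ultimately show ?thesis by blast
qed

lemma Inj_cancel:
  assumes a: "a \<in> Inj m N" and g: "g \<in> Inj p m" and d: "d \<in> Inj p m"
    and eq: "compose {..<p} a g = compose {..<p} a d"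
  shows "g = d"
proof (rule extensionalityI[of _ "{..<p}"])
  show "g \<in> extensional {..<p}" "d \<in> extensional {..<p}" using InjD(2) g d by auto
  fix i assume i: "i \<in> {..<p}"
  have "a (g i) = a (d i)" using fun_cong[OF eq, of i] i by (simp add: compose_eq)
  then show "g i = d i" using InjD(1)[OF a] InjD(4)[OF g] InjD(4)[OF d] i
    by (auto simp: inj_on_def)
qed

lemma Inj_inv:
  assumes a: "a \<in> Inj n n"
  shows "\<exists>a'\<in>Inj n n. compose {..<n} a' a = restrict id {..<n}"
proof -
  have im: "a ` {..<n} = {..<n}" using endo_inj_surj[of "{..<n}" a] InjD[OF a] by auto
  define a' where "a' = restrict (inv_into {..<n} a) {..<n}"
  have "a' \<in> Inj n n"
  proof (rule InjI)
    show "inj_on a' {..<n}" unfolding a'_def using inj_on_inv_into[of "{..<n}" a "{..<n}"] im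
      by (simp add: inj_on_def)
    show "a' \<in> extensional {..<n}" unfolding a'_def by simp
    fix i assume "i < n" then show "a' i < n" unfolding a'_def using im
      by (auto intro: inv_into_into[of _ _ "{..<n}", simplified])
  qed
  moreover have "compose {..<n} a' a = restrict id {..<n}"
    unfolding compose_def apply (rule restrict_ext)
    using InjD[OF a] unfolding a'_def by (auto simp: inv_into_f_f)
  ultimately show ?thesis by blast
qed



locale isp =
  fixes X :: "nat \<Rightarrow> nat \<Rightarrow> 'a set"
    and imap :: "nat \<Rightarrow> nat \<Rightarrow> (nat \<Rightarrow> nat) \<Rightarrow> nat \<Rightarrow> 'a \<Rightarrow> 'a"
    and k :: nat
  assumes maps: "a \<in> Inj m n \<Longrightarrow> x \<in> X m k \<Longrightarrow> imap m n a k x \<in> X n k"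
    and ident: "x \<in> X n k \<Longrightarrow> imap n n (restrict id {..<n}) k x = x"
    and comp: "a \<in> Inj m n \<Longrightarrow> b \<in> Inj n p \<Longrightarrow> x \<in> X m k \<Longrightarrow>
        imap m p (compose {..<m} b a) k x = imap n p b k (imap m n a k x)"
begin

definition val :: "nat \<Rightarrow> nat \<times> (nat \<Rightarrow> nat) \<times> 'a \<Rightarrow> 'a" where
  "val N e = (case e of (m, a, x) \<Rightarrow> imap m N a k x)"

lemma step_elems: "latch_step X imap N k \<subseteq> latch_elems X N k \<times> latch_elems X N k"
proof
  fix p assume "p \<in> latch_step X imap N k"
  then obtain m m' a' b x where p: "p = ((m, compose {..<m} a' b, x), (m', a', imap m m' b k x))"
    and h: "m' < N" "a' \<in> Inj m' N" "b \<in> Inj m m'" "x \<in> X m k"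
    unfolding latch_step_def by blast
  have "m \<le> m'" using Inj_le[OF h(3)] .
  then show "p \<in> latch_elems X N k \<times> latch_elems X N k"
    using h p Inj_compose[OF h(3) h(2)] maps[OF h(3) h(4)] unfolding latch_elems_def by auto
qed

lemma val_step: "(u, v) \<in> latch_step X imap N k \<Longrightarrow> val N u = val N v"
  unfolding latch_step_def val_def by (auto simp: comp)

lemma rel_val: assumes "(u, v) \<in> latch_rel X imap N k" shows "val N u = val N v"
proof -
  let ?S = "latch_step X imap N k \<union> (latch_step X imap N k)\<inverse>"
  have "(u, v) \<in> ?S\<^sup>+ \<Longrightarrow> val N u = val N v"
  proof (induction rule: trancl_induct)
    case (base y) then show ?case using val_step[of u y N] val_step[of y u N] by auto
  next
    case (step y z) then show ?case using val_step[of y z N] val_step[of z y N] by auto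
  qed
  then show ?thesis using assms unfolding latch_rel_def by auto
qed

lemma rel_sub: "latch_rel X imap N k \<subseteq> latch_elems X N k \<times> latch_elems X N k"
proof -
  let ?S = "latch_step X imap N k \<union> (latch_step X imap N k)\<inverse>"
  have "?S \<subseteq> latch_elems X N k \<times> latch_elems X N k" using step_elems by auto
  then have "?S\<^sup>+ \<subseteq> latch_elems X N k \<times> latch_elems X N k" by (rule trancl_subset_Sigma)
  moreover have "latch_rel X imap N k = Id_on (latch_elems X N k) \<union> ?S\<^sup>+" by (simp add: latch_rel_def)
  ultimately show ?thesis by (auto simp: Id_on_def)
qed

lemma rel_equiv: "equiv (latch_elems X N k) (latch_rel X imap N k)"
proof (rule equivI)
  let ?S = "latch_step X imap N k \<union> (latch_step X imap N k)\<inverse>"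
  show "refl_on (latch_elems X N k) (latch_rel X imap N k)"
    using rel_sub unfolding refl_on_def latch_rel_def by auto
  have "sym (?S\<^sup>+)" by (rule sym_trancl) (auto simp: sym_def)
  then show "sym (latch_rel X imap N k)" unfolding latch_rel_def sym_def by auto
  show "trans (latch_rel X imap N k)"
    unfolding trans_def latch_rel_def by (auto dest: trancl_trans)
  show "latch_rel X imap N k \<subseteq> latch_elems X N k \<times> latch_elems X N k" by (rule rel_sub)
qed

lemma lmap_class: assumes "e \<in> latch_elems X N k"
  shows "latching_map X imap N k (latch_rel X imap N k `` {e}) = val N e"
proof -
  have "(\<lambda>(m, a, x). imap m N a k x) ` (latch_rel X imap N k `` {e}) = {val N e}"
  proof
    show "(\<lambda>(m, a, x). imap m N a k x) ` (latch_rel X imap N k `` {e}) \<subseteq> {val N e}"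
      using rel_val[of e _ N] unfolding val_def by force
    have "(e, e) \<in> latch_rel X imap N k" using assms unfolding latch_rel_def by auto
    then show "{val N e} \<subseteq> (\<lambda>(m, a, x). imap m N a k x) ` (latch_rel X imap N k `` {e})"
      unfolding val_def by force
  qed
  then show ?thesis unfolding latching_map_def by simp
qed

lemma flat_iff:
  "inj_on (latching_map X imap N k) (latching_space X imap N k) \<longleftrightarrow>
   (\<forall>u\<in>latch_elems X N k. \<forall>v\<in>latch_elems X N k. val N u = val N v \<longrightarrow> (u, v) \<in> latch_rel X imap N k)"
  (is "?L \<longleftrightarrow> ?R")
proof
  assume L: ?L
  show ?R
  proof (intro ballI impI)
    fix u v assume u: "u \<in> latch_elems X N k" and v: "v \<in> latch_elems X N k" and eq: "val N u = val N v"
    have cu: "latch_rel X imap N k `` {u} \<in> latching_space X imap N k"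
      using u unfolding latching_space_def by (rule quotientI)
    have cv: "latch_rel X imap N k `` {v} \<in> latching_space X imap N k"
      using v unfolding latching_space_def by (rule quotientI)
    have "latch_rel X imap N k `` {u} = latch_rel X imap N k `` {v}"
      using inj_onD[OF L _ cu cv] lmap_class[OF u] lmap_class[OF v] eq by simp
    then show "(u, v) \<in> latch_rel X imap N k"
      using eq_equiv_class_iff[OF rel_equiv u v] by simp
  qed
next
  assume R: ?R
  show ?L
  proof (rule inj_onI)
    fix c d assume c: "c \<in> latching_space X imap N k" and d: "d \<in> latching_space X imap N k"
      and eq: "latching_map X imap N k c = latching_map X imap N k d"
    from c obtain u where u: "u \<in> latch_elems X N k" "c = latch_rel X imap N k `` {u}"
      unfolding latching_space_def by (rule quotientE)
    from d obtain v where v: "v \<in> latch_elems X N k" "d = latch_rel X imap N k `` {v}"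
      unfolding latching_space_def by (rule quotientE)
    have "val N u = val N v" using eq u v lmap_class by simp
    then have "(u, v) \<in> latch_rel X imap N k" using R u v by blast
    then show "c = d" using u v equiv_class_eq[OF rel_equiv] by simp
  qed
qed

lemma rel_invariant:
  assumes "(u, v) \<in> latch_rel X imap N k" "P u"
    and up: "\<And>u v. (u, v) \<in> latch_step X imap N k \<Longrightarrow> P u \<Longrightarrow> P v"
    and down: "\<And>u v. (u, v) \<in> latch_step X imap N k \<Longrightarrow> P v \<Longrightarrow> P u"
  shows "P v"
proof -
  let ?S = "latch_step X imap N k \<union> (latch_step X imap N k)\<inverse>"
  have "(u, v) \<in> ?S\<^sup>+ \<Longrightarrow> P v"
  proof (induction rule: trancl_induct)
    case (base y) then show ?case using assms(2) up[of u y] down[of y u] by auto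
  next
    case (step y z) then show ?case using up[of y z] down[of z y] by auto
  qed
  then show ?thesis using assms(1,2) unfolding latch_rel_def by auto
qed

end


lemma compose_image: "d \<in> Inj p q \<Longrightarrow> compose {..<p} e d ` {..<p} = e ` d ` {..<p}"
  by (auto simp: compose_eq)

context isp
begin

definition Supp :: "nat \<Rightarrow> 'a \<Rightarrow> nat set \<Rightarrow> bool" where
  "Supp N z S \<longleftrightarrow> (\<exists>r c w. c \<in> Inj r N \<and> c ` {..<r} \<subseteq> S \<and> w \<in> X r k \<and> z = imap r N c k w)"

definition GA :: "nat \<Rightarrow> bool" where
  "GA N \<longleftrightarrow> (\<forall>m a. a \<in> Inj m N \<longrightarrow> inj_on (imap m N a k) (X m k))"

definition GB :: "nat \<Rightarrow> bool" where
  "GB N \<longleftrightarrow> (\<forall>z S T. Supp N z S \<longrightarrow> Supp N z T \<longrightarrow> Supp N z (S \<inter> T))"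

lemma SuppI: "c \<in> Inj r N \<Longrightarrow> c ` {..<r} \<subseteq> S \<Longrightarrow> w \<in> X r k \<Longrightarrow> z = imap r N c k w \<Longrightarrow> Supp N z S"
  unfolding Supp_def by blast

lemma Supp_X: "Supp N z S \<Longrightarrow> z \<in> X N k"
  unfolding Supp_def using maps by blast

lemma Supp_factor:
  assumes "Supp N z S" "e \<in> Inj p N" "S \<inter> {..<N} \<subseteq> e ` {..<p}"
  shows "\<exists>w\<in>X p k. z = imap p N e k w"
proof -
  obtain r c w where c: "c \<in> Inj r N" "c ` {..<r} \<subseteq> S" "w \<in> X r k" "z = imap r N c k w"
    using assms(1) unfolding Supp_def by blast
  have "c ` {..<r} \<subseteq> e ` {..<p}" using c(1,2) InjD(3)[OF c(1)] assms(3) by blast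
  then obtain d where d: "d \<in> Inj r p" "compose {..<r} e d = c"
    using Inj_factor[OF c(1) assms(2)] by blast
  have "z = imap p N e k (imap r p d k w)" using c d comp[OF d(1) assms(2) c(3)] by simp
  then show ?thesis using maps[OF d(1) c(3)] by blast
qed

lemma Supp_self: "x \<in> X m k \<Longrightarrow> {..<m} \<subseteq> S \<Longrightarrow> Supp m x S"
  using SuppI[OF Inj_id, of m S x x] ident[of x m] by auto

lemma GA_bij: assumes a: "a \<in> Inj n n" shows "inj_on (imap n n a k) (X n k)"
proof (rule inj_onI)
  fix x y assume x: "x \<in> X n k" and y: "y \<in> X n k" and eq: "imap n n a k x = imap n n a k y"
  obtain a' where a': "a' \<in> Inj n n" "compose {..<n} a' a = restrict id {..<n}"
    using Inj_inv[OF a] by blast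
  have "x = imap n n a' k (imap n n a k x)" using comp[OF a a'(1) x] a'(2) ident[OF x] by simp
  also have "\<dots> = imap n n a' k (imap n n a k y)" using eq by simp
  also have "\<dots> = y" using comp[OF a a'(1) y] a'(2) ident[OF y] by simp
  finally show "x = y" .
qed

lemma step_cases:
  assumes "(u, v) \<in> latch_step X imap N k"
  obtains m m' a' b x where "u = (m, compose {..<m} a' b, x)" "v = (m', a', imap m m' b k x)"
    "m' < N" "a' \<in> Inj m' N" "b \<in> Inj m m'" "x \<in> X m k"
  using assms unfolding latch_step_def by blast

lemma stepI:
  "m' < N \<Longrightarrow> a' \<in> Inj m' N \<Longrightarrow> b \<in> Inj m m' \<Longrightarrow> x \<in> X m k \<Longrightarrow>
   ((m, compose {..<m} a' b, x), (m', a', imap m m' b k x)) \<in> latch_step X imap N k"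
  unfolding latch_step_def by blast

end


context isp
begin

lemma up_GB:
  assumes b: "b \<in> Inj m1 m'" and x: "x \<in> X m1 k"
    and P: "Supp m1 x {i. compose {..<m1} a' b i \<in> S}"
  shows "Supp m' (imap m1 m' b k x) {j. a' j \<in> S}"
proof -
  obtain p d u where d: "d \<in> Inj p m1" "d ` {..<p} \<subseteq> {i. compose {..<m1} a' b i \<in> S}"
    "u \<in> X p k" "x = imap p m1 d k u"
    using P unfolding Supp_def by blast
  have "imap m1 m' b k x = imap p m' (compose {..<p} b d) k u"
    using comp[OF d(1) b d(3)] d(4) by simp
  moreover have "compose {..<p} b d ` {..<p} \<subseteq> {j. a' j \<in> S}"
    using d(2) InjD(4)[OF d(1)] by (auto simp: compose_eq)
  ultimately show ?thesis using SuppI[OF Inj_compose[OF d(1) b] _ d(3)] by blast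
qed

lemma down_GB:
  assumes GA: "GA m'" and GB: "GB m'" and b: "b \<in> Inj m1 m'" and x: "x \<in> X m1 k"
    and P: "Supp m' (imap m1 m' b k x) {j. a' j \<in> S}"
  shows "Supp m1 x {i. compose {..<m1} a' b i \<in> S}"
proof -
  have "Supp m' (imap m1 m' b k x) (b ` {..<m1})" using SuppI[OF b _ x] by blast
  then have "Supp m' (imap m1 m' b k x) ({j. a' j \<in> S} \<inter> b ` {..<m1})"
    using GB P unfolding GB_def by blast
  then obtain q e v where e: "e \<in> Inj q m'" "e ` {..<q} \<subseteq> {j. a' j \<in> S} \<inter> b ` {..<m1}"
    "v \<in> X q k" "imap m1 m' b k x = imap q m' e k v"
    unfolding Supp_def by blast
  obtain e1 where e1: "e1 \<in> Inj q m1" "compose {..<q} b e1 = e"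
    using Inj_factor[OF e(1) b] e(2) by blast
  have "imap m1 m' b k x = imap m1 m' b k (imap q m1 e1 k v)"
    using e(4) comp[OF e1(1) b e(3)] e1(2) by simp
  moreover have "inj_on (imap m1 m' b k) (X m1 k)" using GA b unfolding GA_def by blast
  ultimately have x1: "x = imap q m1 e1 k v"
    using inj_onD[of "imap m1 m' b k" "X m1 k" x "imap q m1 e1 k v"] x maps[OF e1(1) e(3)] by blast
  have "e1 ` {..<q} \<subseteq> {i. compose {..<m1} a' b i \<in> S}"
  proof
    fix i assume "i \<in> e1 ` {..<q}"
    then obtain j where j: "j < q" "i = e1 j" by auto
    have "e j = b (e1 j)" using fun_cong[OF e1(2), of j] j by (simp add: compose_eq)
    moreover have "a' (e j) \<in> S" using e(2) j by auto
    moreover have "e1 j < m1" using InjD(4)[OF e1(1) j(1)] .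
    ultimately show "i \<in> {i. compose {..<m1} a' b i \<in> S}" using j by (simp add: compose_eq)
  qed
  then show ?thesis using SuppI[OF e1(1) _ e(3) x1] by blast
qed

definition PGA :: "nat \<Rightarrow> (nat \<Rightarrow> nat) \<Rightarrow> 'a \<Rightarrow> nat \<Rightarrow> (nat \<Rightarrow> nat) \<Rightarrow> 'a \<Rightarrow> bool" where
  "PGA m a x me ce we \<longleftrightarrow> (\<exists>p d g u. d \<in> Inj p me \<and> g \<in> Inj p m \<and>
     compose {..<p} a g = compose {..<p} ce d \<and> u \<in> X p k \<and> we = imap p me d k u \<and> imap p m g k u = x)"

lemma up_GA:
  assumes b: "b \<in> Inj m1 m'" and P: "PGA m a x m1 (compose {..<m1} a' b) x1"
  shows "PGA m a x m' a' (imap m1 m' b k x1)"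
proof -
  obtain p d g u where h: "d \<in> Inj p m1" "g \<in> Inj p m"
     "compose {..<p} a g = compose {..<p} (compose {..<m1} a' b) d" "u \<in> X p k"
     "x1 = imap p m1 d k u" "imap p m g k u = x"
    using P unfolding PGA_def by blast
  have df: "d \<in> {..<p} \<rightarrow> {..<m1}" using InjD(4)[OF h(1)] by auto
  have "compose {..<p} a g = compose {..<p} a' (compose {..<p} b d)"
    using h(3) compose_assoc[OF df, of a' b] by simp
  moreover have "imap m1 m' b k x1 = imap p m' (compose {..<p} b d) k u"
    using comp[OF h(1) b h(4)] h(5) by simp
  ultimately show ?thesis unfolding PGA_def using Inj_compose[OF h(1) b] h(2,4,6) by blast
qed

lemma down_GA:
  assumes GA: "GA m'" and GB: "GB m'" and b: "b \<in> Inj m1 m'" and x1: "x1 \<in> X m1 k"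
    and P: "PGA m a x m' a' (imap m1 m' b k x1)"
  shows "PGA m a x m1 (compose {..<m1} a' b) x1"
proof -
  obtain p d g u where h: "d \<in> Inj p m'" "g \<in> Inj p m"
     "compose {..<p} a g = compose {..<p} a' d" "u \<in> X p k"
     "imap m1 m' b k x1 = imap p m' d k u" "imap p m g k u = x"
    using P unfolding PGA_def by blast
  have "Supp m' (imap m1 m' b k x1) (b ` {..<m1})" using SuppI[OF b _ x1] by blast
  moreover have "Supp m' (imap m1 m' b k x1) (d ` {..<p})" using SuppI[OF h(1) _ h(4) h(5)] by blast
  ultimately have "Supp m' (imap m1 m' b k x1) (b ` {..<m1} \<inter> d ` {..<p})"
    using GB unfolding GB_def by blast
  then obtain q e v where e: "e \<in> Inj q m'" "e ` {..<q} \<subseteq> b ` {..<m1} \<inter> d ` {..<p}"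
    "v \<in> X q k" "imap m1 m' b k x1 = imap q m' e k v"
    unfolding Supp_def by blast
  obtain e1 where e1: "e1 \<in> Inj q m1" "compose {..<q} b e1 = e"
    using Inj_factor[OF e(1) b] e(2) by blast
  obtain e2 where e2: "e2 \<in> Inj q p" "compose {..<q} d e2 = e"
    using Inj_factor[OF e(1) h(1)] e(2) by blast
  have "imap m1 m' b k x1 = imap m1 m' b k (imap q m1 e1 k v)"
    using e(4) comp[OF e1(1) b e(3)] e1(2) by simp
  moreover have "inj_on (imap m1 m' b k) (X m1 k)" using GA b unfolding GA_def by blast
  ultimately have xv: "x1 = imap q m1 e1 k v"
    using inj_onD[of "imap m1 m' b k" "X m1 k" x1 "imap q m1 e1 k v"] x1 maps[OF e1(1) e(3)] by blast
  have "imap p m' d k u = imap p m' d k (imap q p e2 k v)"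
    using e(4) h(5) comp[OF e2(1) h(1) e(3)] e2(2) by simp
  moreover have "inj_on (imap p m' d k) (X p k)" using GA h(1) unfolding GA_def by blast
  ultimately have uv: "u = imap q p e2 k v"
    using inj_onD[of "imap p m' d k" "X p k" u "imap q p e2 k v"] h(4) maps[OF e2(1) e(3)] by blast
  have g2: "compose {..<q} g e2 \<in> Inj q m" using Inj_compose[OF e2(1) h(2)] .
  have gx: "imap q m (compose {..<q} g e2) k v = x"
    using comp[OF e2(1) h(2) e(3)] uv h(6) by simp
  have e2f: "e2 \<in> {..<q} \<rightarrow> {..<p}" using InjD(4)[OF e2(1)] by auto
  have e1f: "e1 \<in> {..<q} \<rightarrow> {..<m1}" using InjD(4)[OF e1(1)] by auto
  have "compose {..<q} a (compose {..<q} g e2) = compose {..<q} (compose {..<p} a g) e2"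
    by (rule compose_assoc[OF e2f])
  also have "\<dots> = compose {..<q} (compose {..<p} a' d) e2" using h(3) by simp
  also have "\<dots> = compose {..<q} a' e" using compose_assoc[OF e2f, of a' d] e2(2) by simp
  also have "\<dots> = compose {..<q} (compose {..<m1} a' b) e1" using compose_assoc[OF e1f, of a' b] e1(2) by simp
  finally show ?thesis unfolding PGA_def using e1(1) g2 e(3) xv gx by blast
qed

end


context isp
begin

lemma flat_GAB:
  assumes flat: "\<forall>N. inj_on (latching_map X imap N k) (latching_space X imap N k)"
  shows "GA N \<and> GB N"
proof (induction N rule: less_induct)
  case (less N)
  have rel: "\<And>u v. u \<in> latch_elems X N k \<Longrightarrow> v \<in> latch_elems X N k \<Longrightarrow> val N u = val N v \<Longrightarrow>
      (u, v) \<in> latch_rel X imap N k"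
  proof -
    have fl: "inj_on (latching_map X imap N k) (latching_space X imap N k)" using flat by blast
    fix u v assume "u \<in> latch_elems X N k" "v \<in> latch_elems X N k" "val N u = val N v"
    then show "(u, v) \<in> latch_rel X imap N k" using fl unfolding flat_iff by blast
  qed
  have GBN: "GB N"
    unfolding GB_def
  proof (intro allI impI)
    fix z S T assume zS: "Supp N z S" and zT: "Supp N z T"
    obtain r c w where c: "c \<in> Inj r N" "c ` {..<r} \<subseteq> S" "w \<in> X r k" "z = imap r N c k w"
      using zS unfolding Supp_def by blast
    obtain r' c' w' where c': "c' \<in> Inj r' N" "c' ` {..<r'} \<subseteq> T" "w' \<in> X r' k" "z = imap r' N c' k w'"
      using zT unfolding Supp_def by blast
    show "Supp N z (S \<inter> T)"
    proof (cases "{..<N} \<subseteq> S \<or> {..<N} \<subseteq> T")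
      case True
      then show ?thesis
      proof
        assume "{..<N} \<subseteq> S"
        then have "c' ` {..<r'} \<subseteq> S \<inter> T" using c'(2) InjD(3)[OF c'(1)] by blast
        then show ?thesis by (rule SuppI[OF c'(1) _ c'(3,4)])
      next
        assume "{..<N} \<subseteq> T"
        then have "c ` {..<r} \<subseteq> S \<inter> T" using c(2) InjD(3)[OF c(1)] by blast
        then show ?thesis by (rule SuppI[OF c(1) _ c(3,4)])
      qed
    next
      case False
      then obtain j j' where j: "j < N" "j \<notin> S" and j': "j' < N" "j' \<notin> T" by auto
      have rN: "r < N" using Inj_less[OF c(1) j(1)] c(2) j(2) by blast
      have rN': "r' < N" using Inj_less[OF c'(1) j'(1)] c'(2) j'(2) by blast
      have "(r, c, w) \<in> latch_elems X N k" "(r', c', w') \<in> latch_elems X N k"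
        using rN rN' c c' unfolding latch_elems_def by auto
      moreover have "val N (r, c, w) = val N (r', c', w')" using c(4) c'(4) unfolding val_def by simp
      ultimately have R: "((r, c, w), (r', c', w')) \<in> latch_rel X imap N k" using rel by blast
      let ?P = "\<lambda>e. case e of (m1, a1, x1) \<Rightarrow> Supp m1 x1 {i. a1 i \<in> S}"
      have "?P (r', c', w')"
      proof (rule rel_invariant[OF R])
        have "{..<r} \<subseteq> {i. c i \<in> S}" using c(2) by auto
        then show "?P (r, c, w)" using Supp_self[OF c(3)] by simp
      next
        fix u v assume uv: "(u, v) \<in> latch_step X imap N k" "?P u"
        then obtain m m' a' b x where s: "u = (m, compose {..<m} a' b, x)" "v = (m', a', imap m m' b k x)"
          "m' < N" "a' \<in> Inj m' N" "b \<in> Inj m m'" "x \<in> X m k" using step_cases[OF uv(1)] by metis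
        show "?P v" using up_GB[OF s(5) s(6)] uv(2) s by simp
      next
        fix u v assume uv: "(u, v) \<in> latch_step X imap N k" "?P v"
        then obtain m m' a' b x where s: "u = (m, compose {..<m} a' b, x)" "v = (m', a', imap m m' b k x)"
          "m' < N" "a' \<in> Inj m' N" "b \<in> Inj m m'" "x \<in> X m k" using step_cases[OF uv(1)] by metis
        have "GA m'" "GB m'" using less s(3) by auto
        then show "?P u" using down_GB[OF _ _ s(5) s(6)] uv(2) s by simp
      qed
      then have "Supp r' w' {i. c' i \<in> S}" by simp
      then obtain p d u where d: "d \<in> Inj p r'" "d ` {..<p} \<subseteq> {i. c' i \<in> S}" "u \<in> X p k" "w' = imap p r' d k u"
        unfolding Supp_def by blast
      have "z = imap p N (compose {..<p} c' d) k u" using c'(4) d(4) comp[OF d(1) c'(1) d(3)] by simp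
      moreover have "compose {..<p} c' d ` {..<p} \<subseteq> S \<inter> T"
        using d(2) c'(2) InjD(4)[OF d(1)] by (auto simp: compose_eq)
      ultimately show ?thesis using SuppI[OF Inj_compose[OF d(1) c'(1)] _ d(3)] by blast
    qed
  qed
  have GAN: "GA N"
    unfolding GA_def
  proof (intro allI impI)
    fix m a assume a: "a \<in> Inj m N"
    show "inj_on (imap m N a k) (X m k)"
    proof (cases "m < N")
      case False
      then have "m = N" using Inj_le[OF a] by simp
      then show ?thesis using GA_bij a by simp
    next
      case True
      show ?thesis
      proof (rule inj_onI)
        fix x y assume x: "x \<in> X m k" and y: "y \<in> X m k" and eq: "imap m N a k x = imap m N a k y"
        have "(m, a, x) \<in> latch_elems X N k" "(m, a, y) \<in> latch_elems X N k"
          using True a x y unfolding latch_elems_def by auto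
        moreover have "val N (m, a, x) = val N (m, a, y)" using eq unfolding val_def by simp
        ultimately have R: "((m, a, x), (m, a, y)) \<in> latch_rel X imap N k" using rel by blast
        let ?P = "\<lambda>e. case e of (m1, a1, x1) \<Rightarrow> PGA m a x m1 a1 x1"
        have "?P (m, a, y)"
        proof (rule rel_invariant[OF R])
          have "PGA m a x m a x" unfolding PGA_def
            apply (rule exI[where x=m], rule exI[where x="restrict id {..<m}"],
                   rule exI[where x="restrict id {..<m}"], rule exI[where x=x])
            using Inj_id[of m] x ident[OF x] by simp
          then show "?P (m, a, x)" by simp
        next
          fix u v assume uv: "(u, v) \<in> latch_step X imap N k" "?P u"
          then obtain m1 m' a' b x1 where s: "u = (m1, compose {..<m1} a' b, x1)" "v = (m', a', imap m1 m' b k x1)"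
            "m' < N" "a' \<in> Inj m' N" "b \<in> Inj m1 m'" "x1 \<in> X m1 k" using step_cases[OF uv(1)] by metis
          show "?P v" using up_GA[OF s(5)] uv(2) s by simp
        next
          fix u v assume uv: "(u, v) \<in> latch_step X imap N k" "?P v"
          then obtain m1 m' a' b x1 where s: "u = (m1, compose {..<m1} a' b, x1)" "v = (m', a', imap m1 m' b k x1)"
            "m' < N" "a' \<in> Inj m' N" "b \<in> Inj m1 m'" "x1 \<in> X m1 k" using step_cases[OF uv(1)] by metis
          have "GA m'" "GB m'" using less s(3) by auto
          then show "?P u" using down_GA[OF _ _ s(5) s(6)] uv(2) s by simp
        qed
        then obtain p d g u where h: "d \<in> Inj p m" "g \<in> Inj p m"
          "compose {..<p} a g = compose {..<p} a d" "u \<in> X p k" "y = imap p m d k u" "imap p m g k u = x"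
          unfolding PGA_def by auto
        have "g = d" using Inj_cancel[OF a h(2) h(1) h(3)] .
        then show "x = y" using h by simp
      qed
    qed
  qed
  show ?case using GAN GBN by simp
qed

end


lemma Inj_incl: "restrict id {..<a} \<in> Inj a (a + b)"
  by (rule InjI) (auto simp: inj_on_def)

lemma Inj_shift: "(\<lambda>i\<in>{..<a}. l + i) \<in> Inj a (l + a + b)"
  by (rule InjI) (auto simp: inj_on_def)

lemma Inj_shift': "(\<lambda>i\<in>{..<a}. l + i) \<in> Inj a (l + a)"
  by (rule InjI) (auto simp: inj_on_def)

lemma shift_image: "(\<lambda>i\<in>{..<a}. l + i) ` {..<a} = {l..<l + (a::nat)}"
proof
  show "(\<lambda>i\<in>{..<a}. l + i) ` {..<a} \<subseteq> {l..<l + a}" by auto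
  show "{l..<l + a} \<subseteq> (\<lambda>i\<in>{..<a}. l + i) ` {..<a}"
  proof
    fix x assume "x \<in> {l..<l + a}"
    then have "x - l \<in> {..<a}" "x = (\<lambda>i\<in>{..<a}. l + i) (x - l)" by auto
    then show "x \<in> (\<lambda>i\<in>{..<a}. l + i) ` {..<a}" by blast
  qed
qed

context isp
begin

lemma cond_b:
  assumes GB: "GB (l + m + n)"
  shows "imap (l + m) (l + m + n) (restrict id {..<l + m}) k ` X (l + m) k
        \<inter> imap (m + n) (l + m + n) (\<lambda>i\<in>{..<m + n}. l + i) k ` X (m + n) k
        = imap m (l + m + n) (\<lambda>i\<in>{..<m}. l + i) k ` X m k" (is "?A \<inter> ?B = ?C")
proof
  have incl: "restrict id {..<l + m} \<in> Inj (l + m) (l + m + n)" by (rule Inj_incl)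
  have sh: "(\<lambda>i\<in>{..<m + n}. l + i) \<in> Inj (m + n) (l + m + n)"
    using Inj_shift[where a="m + n" and l=l and b=0] by (simp add: add.assoc)
  have sm: "(\<lambda>i\<in>{..<m}. l + i) \<in> Inj m (l + m + n)" by (rule Inj_shift)
  have sm': "(\<lambda>i\<in>{..<m}. l + i) \<in> Inj m (l + m)" by (rule Inj_shift')
  have idm: "restrict id {..<m} \<in> Inj m (m + n)" by (rule Inj_incl)
  have c1: "compose {..<m} (restrict id {..<l + m}) (\<lambda>i\<in>{..<m}. l + i) = (\<lambda>i\<in>{..<m}. l + i)"
    unfolding compose_def by (rule restrict_ext) auto
  have c2: "compose {..<m} (\<lambda>i\<in>{..<m + n}. l + i) (restrict id {..<m}) = (\<lambda>i\<in>{..<m}. l + i)"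
    unfolding compose_def by (rule restrict_ext) auto
  show "?C \<subseteq> ?A \<inter> ?B"
  proof
    fix z assume "z \<in> ?C"
    then obtain u where u: "u \<in> X m k" "z = imap m (l + m + n) (\<lambda>i\<in>{..<m}. l + i) k u" by blast
    have "z = imap (l + m) (l + m + n) (restrict id {..<l + m}) k (imap m (l + m) (\<lambda>i\<in>{..<m}. l + i) k u)"
      using comp[OF sm' incl u(1)] c1 u(2) by simp
    then have "z \<in> ?A" using maps[OF sm' u(1)] by blast
    moreover have "z = imap (m + n) (l + m + n) (\<lambda>i\<in>{..<m + n}. l + i) k (imap m (m + n) (restrict id {..<m}) k u)"
      using comp[OF idm sh u(1)] c2 u(2) by simp
    then have "z \<in> ?B" using maps[OF idm u(1)] by blast
    ultimately show "z \<in> ?A \<inter> ?B" by blast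
  qed
  show "?A \<inter> ?B \<subseteq> ?C"
  proof
    fix z assume z: "z \<in> ?A \<inter> ?B"
    then obtain x y where x: "x \<in> X (l + m) k" "z = imap (l + m) (l + m + n) (restrict id {..<l + m}) k x"
      and y: "y \<in> X (m + n) k" "z = imap (m + n) (l + m + n) (\<lambda>i\<in>{..<m + n}. l + i) k y" by blast
    have s1: "Supp (l + m + n) z (restrict id {..<l + m} ` {..<l + m})"
      using SuppI[OF incl _ x] by blast
    have s2: "Supp (l + m + n) z ((\<lambda>i\<in>{..<m + n}. l + i) ` {..<m + n})"
      using SuppI[OF sh _ y] by blast
    have s: "Supp (l + m + n) z (restrict id {..<l + m} ` {..<l + m} \<inter> (\<lambda>i\<in>{..<m + n}. l + i) ` {..<m + n})"
      using GB s1 s2 unfolding GB_def by blast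
    have "restrict id {..<l + m} ` {..<l + m} \<inter> (\<lambda>i\<in>{..<m + n}. l + i) ` {..<m + n} \<inter> {..<l + m + n}
         \<subseteq> (\<lambda>i\<in>{..<m}. l + i) ` {..<m}"
      using shift_image[of m l] shift_image[of "m + n" l] by auto
    then show "z \<in> ?C" using Supp_factor[OF s sm] by blast
  qed
qed

lemma flat_from:
  assumes GA: "\<And>N. GA N" and GB: "\<And>N. GB N"
  shows "inj_on (latching_map X imap N k) (latching_space X imap N k)"
  unfolding flat_iff
proof (intro ballI impI)
  fix u v assume u: "u \<in> latch_elems X N k" and v: "v \<in> latch_elems X N k" and eq: "val N u = val N v"
  obtain m a x where ux: "u = (m, a, x)" "m < N" "a \<in> Inj m N" "x \<in> X m k"
    using u unfolding latch_elems_def by blast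
  obtain m' a' x' where vx: "v = (m', a', x')" "m' < N" "a' \<in> Inj m' N" "x' \<in> X m' k"
    using v unfolding latch_elems_def by blast
  define z where "z = imap m N a k x"
  have z': "z = imap m' N a' k x'" using eq ux vx unfolding z_def val_def by simp
  have "Supp N z (a ` {..<m})" using SuppI[OF ux(3) _ ux(4)] z_def by blast
  moreover have "Supp N z (a' ` {..<m'})" using SuppI[OF vx(3) _ vx(4) z'] by blast
  ultimately have "Supp N z (a ` {..<m} \<inter> a' ` {..<m'})" using GB unfolding GB_def by blast
  then obtain r c w where c: "c \<in> Inj r N" "c ` {..<r} \<subseteq> a ` {..<m} \<inter> a' ` {..<m'}" "w \<in> X r k"
    "z = imap r N c k w" unfolding Supp_def by blast
  have key: "((r, c, w), (mm, aa, xx)) \<in> latch_rel X imap N k"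
    if h: "mm < N" "aa \<in> Inj mm N" "xx \<in> X mm k" "z = imap mm N aa k xx" "c ` {..<r} \<subseteq> aa ` {..<mm}"
    for mm aa xx
  proof -
    obtain b where b: "b \<in> Inj r mm" "compose {..<r} aa b = c" using Inj_factor[OF c(1) h(2) h(5)] by blast
    have "imap mm N aa k xx = imap mm N aa k (imap r mm b k w)"
      using h(4) c(4) comp[OF b(1) h(2) c(3)] b(2) by simp
    moreover have "inj_on (imap mm N aa k) (X mm k)" using GA h(2) unfolding GA_def by blast
    ultimately have "xx = imap r mm b k w"
      using inj_onD[of "imap mm N aa k" "X mm k" xx "imap r mm b k w"] h(3) maps[OF b(1) c(3)] by blast
    then have "((r, c, w), (mm, aa, xx)) \<in> latch_step X imap N k"
      using stepI[OF h(1) h(2) b(1) c(3)] b(2) by simp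
    then show ?thesis unfolding latch_rel_def by auto
  qed
  have r1: "((r, c, w), u) \<in> latch_rel X imap N k" using key[OF ux(2,3,4) z_def] c(2) ux(1) by blast
  have r2: "((r, c, w), v) \<in> latch_rel X imap N k" using key[OF vx(2,3,4) z'] c(2) vx(1) by blast
  have eqv: "equiv (latch_elems X N k) (latch_rel X imap N k)" by (rule rel_equiv)
  have "(u, (r, c, w)) \<in> latch_rel X imap N k" using r1 eqv unfolding equiv_def sym_def by blast
  then show "(u, v) \<in> latch_rel X imap N k" using r2 eqv unfolding equiv_def trans_def by blast
qed

end


lemma ex_enum: "finite (A::nat set) \<Longrightarrow> \<exists>f. bij_betw f {..<card A} A"
  using ex_bij_betw_nat_finite[of A] by (simp add: atLeast0LessThan)

lemma minus_image: "(\<lambda>i. i - l) ` {l..<l + (m::nat)} = {..<m}"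
proof
  show "(\<lambda>i. i - l) ` {l..<l + m} \<subseteq> {..<m}" by auto
  show "{..<m} \<subseteq> (\<lambda>i. i - l) ` {l..<l + m}"
  proof
    fix x assume "x \<in> {..<m}"
    then have "x + l \<in> {l..<l + m}" "x = (x + l) - l" by auto
    then show "x \<in> (\<lambda>i. i - l) ` {l..<l + m}" by blast
  qed
qed

context isp
begin

lemma GB_from:
  assumes GA: "\<And>N. GA N"
    and condB: "\<And>l m n. imap (l + m) (l + m + n) (restrict id {..<l + m}) k ` X (l + m) k
        \<inter> imap (m + n) (l + m + n) (\<lambda>i\<in>{..<m + n}. l + i) k ` X (m + n) k
        = imap m (l + m + n) (\<lambda>i\<in>{..<m}. l + i) k ` X m k"
  shows "GB N"
  unfolding GB_def
proof (intro allI impI)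
  fix z S T assume zS: "Supp N z S" and zT: "Supp N z T"
  define S' where "S' = S \<inter> {..<N}"
  define T' where "T' = T \<inter> {..<N}"
  define A where "A = S' - T'"
  define B where "B = S' \<inter> T'"
  define C where "C = T' - S'"
  have fin: "finite A" "finite B" "finite C" unfolding A_def B_def C_def S'_def T'_def by auto
  obtain fA where fA: "bij_betw fA {..<card A} A" using ex_enum[OF fin(1)] by blast
  obtain fB where fB: "bij_betw fB {..<card B} B" using ex_enum[OF fin(2)] by blast
  obtain fC where fC: "bij_betw fC {..<card C} C" using ex_enum[OF fin(3)] by blast
  define l where "l = card A"
  define m where "m = card B"
  define n where "n = card C"
  define e where "e = (\<lambda>i\<in>{..<l + m + n}. if i < l then fA i else if i < l + m then fB (i - l) else fC (i - l - m))"
  have ea: "\<And>i. i < l \<Longrightarrow> e i = fA i" unfolding e_def by simp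
  have eb: "\<And>i. l \<le> i \<Longrightarrow> i < l + m \<Longrightarrow> e i = fB (i - l)" unfolding e_def by simp
  have ec: "\<And>i. l + m \<le> i \<Longrightarrow> i < l + m + n \<Longrightarrow> e i = fC (i - l - m)" unfolding e_def by simp
  have fAi: "\<And>i. i < l \<Longrightarrow> fA i \<in> A" using fA unfolding l_def bij_betw_def by auto
  have fBi: "\<And>i. i < m \<Longrightarrow> fB i \<in> B" using fB unfolding m_def bij_betw_def by auto
  have fCi: "\<And>i. i < n \<Longrightarrow> fC i \<in> C" using fC unfolding n_def bij_betw_def by auto
  have iA: "\<And>i j. i < l \<Longrightarrow> j < l \<Longrightarrow> fA i = fA j \<Longrightarrow> i = j"
    using fA unfolding l_def bij_betw_def inj_on_def by auto
  have iB: "\<And>i j. i < m \<Longrightarrow> j < m \<Longrightarrow> fB i = fB j \<Longrightarrow> i = j"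
    using fB unfolding m_def bij_betw_def inj_on_def by auto
  have iC: "\<And>i j. i < n \<Longrightarrow> j < n \<Longrightarrow> fC i = fC j \<Longrightarrow> i = j"
    using fC unfolding n_def bij_betw_def inj_on_def by auto
  have dAB: "A \<inter> B = {}" and dAC: "A \<inter> C = {}" and dBC: "B \<inter> C = {}"
    unfolding A_def B_def C_def by auto
  have sub: "A \<subseteq> {..<N}" "B \<subseteq> {..<N}" "C \<subseteq> {..<N}" unfolding A_def B_def C_def S'_def T'_def by auto
  have piece: "\<And>i. i < l + m + n \<Longrightarrow> (i < l \<and> e i \<in> A) \<or> (l \<le> i \<and> i < l + m \<and> e i \<in> B) \<or> (l + m \<le> i \<and> e i \<in> C)"
  proof -
    fix i assume i: "i < l + m + n"
    show "(i < l \<and> e i \<in> A) \<or> (l \<le> i \<and> i < l + m \<and> e i \<in> B) \<or> (l + m \<le> i \<and> e i \<in> C)"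
    proof (cases "i < l")
      case True then show ?thesis using ea fAi by simp
    next
      case False
      show ?thesis
      proof (cases "i < l + m")
        case True then show ?thesis using False eb fBi by simp
      next
        case F2: False then show ?thesis using False i ec fCi by simp
      qed
    qed
  qed
  have einj: "inj_on e {..<l + m + n}"
  proof (rule inj_onI)
    fix i j assume i: "i \<in> {..<l + m + n}" and j: "j \<in> {..<l + m + n}" and eq: "e i = e j"
    have pi: "(i < l \<and> e i \<in> A) \<or> (l \<le> i \<and> i < l + m \<and> e i \<in> B) \<or> (l + m \<le> i \<and> e i \<in> C)"
      using piece i by simp
    have pj: "(j < l \<and> e j \<in> A) \<or> (l \<le> j \<and> j < l + m \<and> e j \<in> B) \<or> (l + m \<le> j \<and> e j \<in> C)"
      using piece j by simp
    have d1: "\<And>x. x \<in> A \<Longrightarrow> x \<in> B \<Longrightarrow> False" using dAB by blast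
    have d2: "\<And>x. x \<in> A \<Longrightarrow> x \<in> C \<Longrightarrow> False" using dAC by blast
    have d3: "\<And>x. x \<in> B \<Longrightarrow> x \<in> C \<Longrightarrow> False" using dBC by blast
    show "i = j"
    proof (cases "i < l")
      case True
      then have "e j \<in> A" using eq ea[OF True] fAi[OF True] by metis
      then have "j < l" using pj d1 d2 by blast
      then show ?thesis using True eq ea iA by simp
    next
      case F1: False
      show ?thesis
      proof (cases "i < l + m")
        case True
        then have "e j \<in> B" using eq eb[of i] fBi[of "i - l"] F1 True by simp
        then have j2: "l \<le> j" "j < l + m" using pj d1 d3 by blast+
        have "fB (i - l) = fB (j - l)" using eq eb F1 True j2 by simp
        then have "i - l = j - l" using iB F1 True j2 by simp
        then show ?thesis using F1 j2 by linarith
      next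
        case False
        then have "e j \<in> C" using eq ec[of i] fCi[of "i - l - m"] F1 False i by simp
        then have j2: "l + m \<le> j" using pj d2 d3 by blast
        have "fC (i - l - m) = fC (j - l - m)" using eq ec False i j j2 by simp
        then have "i - l - m = j - l - m" using iC False i j j2 by simp
        then show ?thesis using False j2 by linarith
      qed
    qed
  qed
  have eInj: "e \<in> Inj (l + m + n) N"
  proof (rule InjI[OF einj])
    show "e \<in> extensional {..<l + m + n}" unfolding e_def by simp
    fix i assume "i < l + m + n"
    then show "e i < N" using piece[of i] sub by blast
  qed
  have imA: "e ` {..<l} = A"
  proof -
    have "e ` {..<l} = fA ` {..<l}" using ea by (auto intro: image_cong)
    then show ?thesis using fA unfolding l_def bij_betw_def by simp
  qed
  have imB: "e ` {l..<l + m} = B"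
  proof -
    have "e ` {l..<l + m} = (fB \<circ> (\<lambda>i. i - l)) ` {l..<l + m}" using eb by (auto intro: image_cong)
    also have "\<dots> = fB ` {..<m}" by (metis image_comp minus_image)
    finally show ?thesis using fB unfolding m_def bij_betw_def by simp
  qed
  have incl: "restrict id {..<l + m} \<in> Inj (l + m) (l + m + n)" by (rule Inj_incl)
  have sh: "(\<lambda>i\<in>{..<m + n}. l + i) \<in> Inj (m + n) (l + m + n)"
    using Inj_shift[where a="m + n" and l=l and b=0] by (simp add: add.assoc)
  have sm: "(\<lambda>i\<in>{..<m}. l + i) \<in> Inj m (l + m + n)" by (rule Inj_shift)
  have "{..<l + m} = {..<l} \<union> {l..<l + m}" by auto
  then have "e ` {..<l + m} = A \<union> B" using imA imB by (simp add: image_Un)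
  moreover have "A \<union> B = S'" unfolding A_def B_def by auto
  ultimately have imS: "e ` {..<l + m} = S'" by simp
  have imT: "e ` {l..<l + m + n} \<subseteq> T'"
  proof
    fix y assume "y \<in> e ` {l..<l + m + n}"
    then obtain i where i: "l \<le> i" "i < l + m + n" "y = e i" by auto
    then show "y \<in> T'" using piece[of i] unfolding B_def C_def by auto
  qed
  have imT': "T' \<subseteq> e ` {l..<l + m + n}"
  proof
    fix y assume y: "y \<in> T'"
    show "y \<in> e ` {l..<l + m + n}"
    proof (cases "y \<in> S'")
      case True
      then have "y \<in> B" using y unfolding B_def by simp
      then show ?thesis using imB by auto
    next
      case False
      then have "y \<in> C" using y unfolding C_def by simp
      then obtain j where j: "j < n" "y = fC j" using fC unfolding n_def bij_betw_def by auto
      then have "y = e (j + l + m)" using ec[of "j + l + m"] by simp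
      moreover have "j + l + m \<in> {l..<l + m + n}" using j by simp
      ultimately show ?thesis by blast
    qed
  qed
  have c1: "compose {..<l + m} e (restrict id {..<l + m}) ` {..<l + m} = e ` {..<l + m}"
    by (auto simp: compose_eq)
  have c2: "compose {..<m + n} e (\<lambda>i\<in>{..<m + n}. l + i) ` {..<m + n} = e ` {l..<l + m + n}"
  proof -
    have "(\<lambda>i\<in>{..<m + n}. l + i) ` {..<m + n} = {l..<l + m + n}"
      using shift_image[where a="m + n" and l=l] by (simp only: add.assoc)
    then show ?thesis by (simp only: compose_image[OF sh])
  qed
  have c3: "compose {..<m} e (\<lambda>i\<in>{..<m}. l + i) ` {..<m} = B"
  proof -
    have "(\<lambda>i\<in>{..<m}. l + i) ` {..<m} = {l..<l + m}" by (rule shift_image)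
    then show ?thesis using imB by (simp only: compose_image[OF sm])
  qed
  obtain w1 where w1: "w1 \<in> X (l + m) k" "z = imap (l + m) N (compose {..<l + m} e (restrict id {..<l + m})) k w1"
    using Supp_factor[OF zS Inj_compose[OF incl eInj]] c1 imS unfolding S'_def by auto
  obtain w2 where w2: "w2 \<in> X (m + n) k" "z = imap (m + n) N (compose {..<m + n} e (\<lambda>i\<in>{..<m + n}. l + i)) k w2"
    using Supp_factor[OF zT Inj_compose[OF sh eInj]] c2 imT' unfolding T'_def by auto
  have z1: "z = imap (l + m + n) N e k (imap (l + m) (l + m + n) (restrict id {..<l + m}) k w1)"
    using w1 comp[OF incl eInj w1(1)] by simp
  have z2: "z = imap (l + m + n) N e k (imap (m + n) (l + m + n) (\<lambda>i\<in>{..<m + n}. l + i) k w2)"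
    using w2 comp[OF sh eInj w2(1)] by simp
  have "inj_on (imap (l + m + n) N e k) (X (l + m + n) k)" using GA eInj unfolding GA_def by blast
  then have eq12: "imap (l + m) (l + m + n) (restrict id {..<l + m}) k w1
      = imap (m + n) (l + m + n) (\<lambda>i\<in>{..<m + n}. l + i) k w2"
    using z1 z2 maps[OF incl w1(1)] maps[OF sh w2(1)] by (auto dest: inj_onD)
  then have "imap (l + m) (l + m + n) (restrict id {..<l + m}) k w1 \<in>
      imap m (l + m + n) (\<lambda>i\<in>{..<m}. l + i) k ` X m k"
    using condB[of l m n] w1(1) w2(1) by blast
  then obtain u where u: "u \<in> X m k"
    "imap (l + m) (l + m + n) (restrict id {..<l + m}) k w1 = imap m (l + m + n) (\<lambda>i\<in>{..<m}. l + i) k u"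
    by blast
  have "z = imap m N (compose {..<m} e (\<lambda>i\<in>{..<m}. l + i)) k u"
    using z1 u comp[OF sm eInj u(1)] by simp
  moreover have "B \<subseteq> S \<inter> T" unfolding B_def S'_def T'_def by auto
  ultimately show "Supp N z (S \<inter> T)" using SuppI[OF Inj_compose[OF sm eInj] _ u(1)] c3 by blast
qed

lemma main_k:
  "(\<forall>N. inj_on (latching_map X imap N k) (latching_space X imap N k)) \<longleftrightarrow>
   ((\<forall>m n a. a \<in> Inj m n \<longrightarrow> inj_on (imap m n a k) (X m k))
   \<and> (\<forall>l m n.
        imap (l + m) (l + m + n) (restrict id {..<l + m}) k ` X (l + m) k
        \<inter> imap (m + n) (l + m + n) (\<lambda>i\<in>{..<m + n}. l + i) k ` X (m + n) k
        = imap m (l + m + n) (\<lambda>i\<in>{..<m}. l + i) k ` X m k))" (is "?L \<longleftrightarrow> ?A \<and> ?B")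
proof
  assume L: ?L
  have GAB: "\<And>N. GA N \<and> GB N" using flat_GAB[OF L] .
  have "?A"
  proof (intro allI impI)
    fix m n a assume "a \<in> Inj m n"
    moreover have "GA n" using GAB by simp
    ultimately show "inj_on (imap m n a k) (X m k)" unfolding GA_def by blast
  qed
  moreover have "?B"
  proof (intro allI)
    fix l m n
    have "GB (l + m + n)" using GAB by simp
    then show "imap (l + m) (l + m + n) (restrict id {..<l + m}) k ` X (l + m) k
        \<inter> imap (m + n) (l + m + n) (\<lambda>i\<in>{..<m + n}. l + i) k ` X (m + n) k
        = imap m (l + m + n) (\<lambda>i\<in>{..<m}. l + i) k ` X m k" by (rule cond_b)
  qed
  ultimately show "?A \<and> ?B" ..
next
  assume R: "?A \<and> ?B"
  then have RA: ?A and RB: ?B by auto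
  have GA: "\<And>N. GA N" unfolding GA_def using RA by blast
  have cB: "\<And>l m n. imap (l + m) (l + m + n) (restrict id {..<l + m}) k ` X (l + m) k
        \<inter> imap (m + n) (l + m + n) (\<lambda>i\<in>{..<m + n}. l + i) k ` X (m + n) k
        = imap m (l + m + n) (\<lambda>i\<in>{..<m}. l + i) k ` X m k" using RB by blast
  have GB: "\<And>N. GB N" by (rule GB_from[OF GA cB])
  show ?L using flat_from[OF GA GB] by blast
qed

end

lemma isp_from:
  assumes "I_space X imap smap" shows "isp X imap k"
proof -
  have h1: "\<forall>m n a k. a \<in> Inj m n \<longrightarrow> imap m n a k \<in> X m k \<rightarrow> X n k"
    using assms unfolding I_space_def by (rule conjunct1)
  have h2: "\<forall>n k x. x \<in> X n k \<longrightarrow> imap n n (restrict id {..<n}) k x = x"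
    using assms unfolding I_space_def by (rule conjunct1[OF conjunct2])
  have h3: "\<forall>m n p a b k x. a \<in> Inj m n \<longrightarrow> b \<in> Inj n p \<longrightarrow> x \<in> X m k \<longrightarrow>
        imap m p (compose {..<m} b a) k x = imap n p b k (imap m n a k x)"
    using assms unfolding I_space_def by (rule conjunct1[OF conjunct2[OF conjunct2]])
  note h = h1 h2 h3
  show ?thesis
  proof
    fix a m n x assume a: "a \<in> Inj m n" and x: "x \<in> X m k"
    show "imap m n a k x \<in> X n k" by (rule funcset_mem[OF h1[rule_format, OF a] x])
  next
    fix x n assume x: "x \<in> X n k"
    show "imap n n (restrict id {..<n}) k x = x" by (rule h2[rule_format, OF x])
  next
    fix a m n b p x assume a: "a \<in> Inj m n" and b: "b \<in> Inj n p" and x: "x \<in> X m k"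
    show "imap m p (compose {..<m} b a) k x = imap n p b k (imap m n a k x)"
      by (rule h3[rule_format, OF a b x])
  qed
qed



theorem proposition3p9:
  fixes X :: "nat \<Rightarrow> nat \<Rightarrow> 'a set"
    and imap :: "nat \<Rightarrow> nat \<Rightarrow> (nat \<Rightarrow> nat) \<Rightarrow> nat \<Rightarrow> 'a \<Rightarrow> 'a"
    and smap :: "nat \<Rightarrow> nat \<Rightarrow> (nat \<Rightarrow> nat) \<Rightarrow> nat \<Rightarrow> 'a \<Rightarrow> 'a"
  assumes "I_space X imap smap"
  shows "flat_I_space X imap \<longleftrightarrow>
     (\<forall>m n a k. a \<in> Inj m n \<longrightarrow> inj_on (imap m n a k) (X m k))
   \<and> (\<forall>l m n k.
        imap (l + m) (l + m + n) (restrict id {..<l + m}) k ` X (l + m) k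
        \<inter> imap (m + n) (l + m + n) (\<lambda>i\<in>{..<m + n}. l + i) k ` X (m + n) k
        = imap m (l + m + n) (\<lambda>i\<in>{..<m}. l + i) k ` X m k)"
proof -
  have K: "\<And>k. (\<forall>N. inj_on (latching_map X imap N k) (latching_space X imap N k)) \<longleftrightarrow>
   ((\<forall>m n a. a \<in> Inj m n \<longrightarrow> inj_on (imap m n a k) (X m k))
   \<and> (\<forall>l m n.
        imap (l + m) (l + m + n) (restrict id {..<l + m}) k ` X (l + m) k
        \<inter> imap (m + n) (l + m + n) (\<lambda>i\<in>{..<m + n}. l + i) k ` X (m + n) k
        = imap m (l + m + n) (\<lambda>i\<in>{..<m}. l + i) k ` X m k))"
    by (rule isp.main_k[OF isp_from[OF assms]])
  have "flat_I_space X imap \<longleftrightarrow> (\<forall>k. \<forall>N. inj_on (latching_map X imap N k) (latching_space X imap N k))"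
    unfolding flat_I_space_def by blast
  also have "\<dots> \<longleftrightarrow> (\<forall>k. (\<forall>m n a. a \<in> Inj m n \<longrightarrow> inj_on (imap m n a k) (X m k))
   \<and> (\<forall>l m n.
        imap (l + m) (l + m + n) (restrict id {..<l + m}) k ` X (l + m) k
        \<inter> imap (m + n) (l + m + n) (\<lambda>i\<in>{..<m + n}. l + i) k ` X (m + n) k
        = imap m (l + m + n) (\<lambda>i\<in>{..<m}. l + i) k ` X m k))"
    by (simp only: K)
  also have "\<dots> \<longleftrightarrow> ((\<forall>m n a k. a \<in> Inj m n \<longrightarrow> inj_on (imap m n a k) (X m k))
   \<and> (\<forall>l m n k.
        imap (l + m) (l + m + n) (restrict id {..<l + m}) k ` X (l + m) k
        \<inter> imap (m + n) (l + m + n) (\<lambda>i\<in>{..<m + n}. l + i) k ` X (m + n) k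
        = imap m (l + m + n) (\<lambda>i\<in>{..<m}. l + i) k ` X m k))" (is "(\<forall>k. ?P k \<and> ?Q k) \<longleftrightarrow> ?R1 \<and> ?R2")
  proof
    assume H: "\<forall>k. ?P k \<and> ?Q k"
    have "?R1"
    proof (intro allI impI)
      fix m n a k assume "a \<in> Inj m n"
      moreover have "?P k" using H by blast
      ultimately show "inj_on (imap m n a k) (X m k)" by blast
    qed
    moreover have "?R2"
    proof (intro allI)
      fix l m n k
      have "?Q k" using H by blast
      then show "imap (l + m) (l + m + n) (restrict id {..<l + m}) k ` X (l + m) k
        \<inter> imap (m + n) (l + m + n) (\<lambda>i\<in>{..<m + n}. l + i) k ` X (m + n) k
        = imap m (l + m + n) (\<lambda>i\<in>{..<m}. l + i) k ` X m k" by blast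
    qed
    ultimately show "?R1 \<and> ?R2" ..
  next
    assume H: "?R1 \<and> ?R2"
    show "\<forall>k. ?P k \<and> ?Q k"
    proof
      fix k
      have "?P k" using H by blast
      moreover have "?Q k" using H by blast
      ultimately show "?P k \<and> ?Q k" ..
    qed
  qed
  finally show ?thesis .
qed

end
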